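(* Let the Schreier families be the standard ones described in the context. If $\alpha$ and $\eta$ are countable ordinals with $\ell(\alpha)\le\eta$ and $m\in\mathbb{N}$, then $\mathcal{S}_\alpha[\mathcal{S}_{\omega^\eta\cdot m}]=\mathcal{S}_{\omega^\eta\cdot m+\alpha}$.
   Context: For finite $E,F\subseteq\mathbb{N}$, $E<F$ means $\max E<\min F$. $\mathcal{M}[\mathcal{N}]=\{\bigcup_{i=1}^kF_i:F_i\in\mathcal{N},F_1<\dots<F_k,\{\min F_1,\dots,\min F_k\}\in\mathcal{M}\}$. For a countable ordinal $\eta\ne0$ with Cantor normal form $\omega^{\gamma_1}k_1+\dots+\omega^{\gamma_p}k_p$ ($\gamma_1>\dots>\gamma_p$), $\ell(\eta)=\gamma_1$ (and $\ell(0)=0$). Schreier families: $\mathcal{S}_0=\{\{n\}:n\in\mathbb{N}\}\cup\{\emptyset\}$, $\mathcal{S}_1=\{F\subseteq\mathbb{N}\text{ finite}:|F|\le\min F\}$, $\mathcal{S}_{\beta+1}=\mathcal{S}_1[\mathcal{S}_\beta]$, and for a countable limit ordinal $\beta$ with associated sequence $\hat\beta_n\uparrow\beta$, $\mathcal{S}_\beta=\{F:F\in\mathcal{S}_{\hat\beta_n}\text{ for some }n\le\min F\}$. Standard choice: fix for every countable limit ordinal $\lambda$ a sequence $(\zeta_n)$ strictly increasing to $\lambda$; for a limit ordinal $\beta=\omega^{\beta_1}m_1+\dots+\omega^{\beta_k}m_k$ (Cantor normal form, $\beta_k\ge1$) set $\hat\beta_n=\omega^{\beta_1}m_1+\dots+\omega^{\beta_k}(m_k-1)+\omega^{\beta_k-1}\cdot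 n$ if $\beta_k$ is a successor, and $\hat\beta_n=\omega^{\beta_1}m_1+\dots+\omega^{\beta_k}(m_k-1)+\omega^{\zeta_n}$ if $\beta_k$ is a limit with fixed sequence $(\zeta_n)\uparrow\beta_k$. *)

theory Defs
  imports "HOL-Library.Countable_Set"
begin

text \<open>We work in an arbitrary well-ordered type 'o; the theorem assumes that
every initial segment is countable and the type itself is uncountable, i.e.
'o has order type omega_1, so its elements are exactly the countable ordinals.\<close>

definition ozero :: "'o::wellorder" where
  "ozero = (LEAST x. True)"

definition osucc :: "'o::wellorder \<Rightarrow> 'o" where
  "osucc x = (LEAST y. x < y)"

definition osup :: "'o::wellorder set \<Rightarrow> 'o" where
  "osup A = (LEAST y. \<forall>a\<in>A. a \<le> y)"

definition is_limit :: "'o::wellorder \<Rightarrow> bool" where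
  "is_limit x \<longleftrightarrow> x \<noteq> ozero \<and> (\<forall>y<x. osucc y < x)"

definition is_succ :: "'o::wellorder \<Rightarrow> bool" where
  "is_succ x \<longleftrightarrow> (\<exists>y. x = osucc y)"

definition opred :: "'o::wellorder \<Rightarrow> 'o" where
  "opred x = (THE y. x = osucc y)"

definition oadd :: "'o::wellorder \<Rightarrow> 'o \<Rightarrow> 'o" where
  "oadd a = (THE f. f ozero = a \<and> (\<forall>b. f (osucc b) = osucc (f b))
      \<and> (\<forall>l. is_limit l \<longrightarrow> f l = osup (f ` {b. b < l})))"

definition omul :: "'o::wellorder \<Rightarrow> 'o \<Rightarrow> 'o" where
  "omul a = (THE f. f ozero = ozero \<and> (\<forall>b. f (osucc b) = oadd (f b) a)
      \<and> (\<forall>l. is_limit l \<longrightarrow> f l = osup (f ` {b. b < l})))"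

definition oone :: "'o::wellorder" where
  "oone = osucc ozero"

definition oomega :: "'o::wellorder" where
  "oomega = (LEAST x. is_limit x)"

definition oexp_omega :: "'o::wellorder \<Rightarrow> 'o" where
  "oexp_omega = (THE f. f ozero = oone \<and> (\<forall>b. f (osucc b) = omul (f b) oomega)
      \<and> (\<forall>l. is_limit l \<longrightarrow> f l = osup (f ` {b. b < l})))"

definition onat :: "nat \<Rightarrow> 'o::wellorder" where
  "onat n = (osucc ^^ n) ozero"

text \<open>A Cantor normal form is a list [(g1,k1),...,(gp,kp)] with g1 > ... > gp
and all ki >= 1, denoting omega^g1 * k1 + ... + omega^gp * kp.\<close>

definition cnf_eval :: "('o::wellorder \<times> nat) list \<Rightarrow> 'o" where
  "cnf_eval xs = foldl (\<lambda>acc (g, k). oadd acc (omul (oexp_omega g) (onat k))) ozero xs"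

definition cnf_valid :: "('o::wellorder \<times> nat) list \<Rightarrow> bool" where
  "cnf_valid xs \<longleftrightarrow> sorted_wrt (\<lambda>p q. fst q < fst p) xs \<and> (\<forall>p\<in>set xs. 1 \<le> snd p)"

definition cnf :: "'o::wellorder \<Rightarrow> ('o \<times> nat) list" where
  "cnf b = (THE xs. cnf_valid xs \<and> cnf_eval xs = b)"

definition ell :: "'o::wellorder \<Rightarrow> 'o" where
  "ell e = (if e = ozero then ozero else fst (hd (cnf e)))"

text \<open>The associated sequence hat-beta_n (n >= 1) of a limit ordinal beta, given the
fixed sequences zeta (zeta l is the fixed sequence for the limit ordinal l).\<close>
definition hat :: "('o::wellorder \<Rightarrow> nat \<Rightarrow> 'o) \<Rightarrow> 'o \<Rightarrow> nat \<Rightarrow> 'o" where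
  "hat zeta b n =
     (let xs = cnf b; (bk, mk) = last xs;
          d = cnf_eval (butlast xs @ [(bk, mk - 1)])
      in if is_succ bk then oadd d (omul (oexp_omega (opred bk)) (onat n))
         else oadd d (oexp_omega (zeta bk n)))"

definition fset_less :: "nat set \<Rightarrow> nat set \<Rightarrow> bool" where
  "fset_less E F \<longleftrightarrow> Max E < Min F"

text \<open>M[N]: unions of N-sets F_1 < ... < F_k (nonempty, k >= 0) with {min F_i} in M.\<close>
definition fam_comp :: "nat set set \<Rightarrow> nat set set \<Rightarrow> nat set set" where
  "fam_comp M N = {\<Union>(set Fs) | Fs.
      (\<forall>F\<in>set Fs. F \<in> N \<and> F \<noteq> {} \<and> finite F)
      \<and> sorted_wrt fset_less Fs \<and> set (map Min Fs) \<in> M}"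

text \<open>Ground set: the positive naturals.\<close>
definition schreier0 :: "nat set set" where
  "schreier0 = {{n} | n. 1 \<le> n} \<union> {{}}"

definition schreier1 :: "nat set set" where
  "schreier1 = {F. finite F \<and> 0 \<notin> F \<and> card F \<le> Min F} \<union> {{}}"

definition schreier_rec :: "('o::wellorder \<Rightarrow> nat \<Rightarrow> 'o) \<Rightarrow> ('o \<Rightarrow> nat set set) \<Rightarrow> bool" where
  "schreier_rec zeta S \<longleftrightarrow>
     S ozero = schreier0 \<and>
     (\<forall>b. S (osucc b) = fam_comp schreier1 (S b)) \<and>
     (\<forall>l. is_limit l \<longrightarrow>
        S l = {{}} \<union> {F. F \<noteq> {} \<and> (\<exists>n. 1 \<le> n \<and> n \<le> Min F \<and> F \<in> S (hat zeta l n))})"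

definition schreier :: "('o::wellorder \<Rightarrow> nat \<Rightarrow> 'o) \<Rightarrow> 'o \<Rightarrow> nat set set" where
  "schreier zeta = (THE S. schreier_rec zeta S)"

end

theory Submission
  imports Defs
begin


lemma ozero_le[simp]: "ozero \<le> x"
  unfolding ozero_def by (rule Least_le) simp

lemma le_ozero_iff[simp]: "x \<le> ozero \<longleftrightarrow> x = ozero"
  using ozero_le[of x] by (auto simp del: ozero_le)

lemma not_less_ozero[simp]: "\<not> x < ozero"
  using ozero_le[of x] by (auto simp del: ozero_le)

lemma osup_least: "(\<And>a. a \<in> A \<Longrightarrow> a \<le> y) \<Longrightarrow> osup A \<le> y"
  unfolding osup_def by (rule Least_le) auto

lemma osucc_le: "x < y \<Longrightarrow> osucc x \<le> y"
  unfolding osucc_def by (rule Least_le)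

lemma not_limit_ozero[simp]: "\<not> is_limit ozero"
  unfolding is_limit_def by auto

lemma limit_osucc_less: "is_limit l \<Longrightarrow> y < l \<Longrightarrow> osucc y < l"
  unfolding is_limit_def by auto

lemma limit_pos: "is_limit l \<Longrightarrow> ozero < l"
  unfolding is_limit_def using ozero_le by (auto simp: le_less)

definition orec :: "'o::wellorder \<Rightarrow> ('o \<Rightarrow> 'o) \<Rightarrow> 'o \<Rightarrow> 'o" where
  "orec a g = wfrec {(x, y). x < y} (\<lambda>h x. if x = ozero then a else if is_succ x then g (h (opred x))
      else osup (h ` {b. b < x}))"

locale om1 =
  fixes zeta :: "'o::wellorder \<Rightarrow> nat \<Rightarrow> 'o"
  assumes cnt: "\<forall>x::'o. countable {y. y < x}"
    and unc: "\<not> countable (UNIV :: 'o set)"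
    and zeta_ok: "\<forall>l. is_limit l \<longrightarrow> strict_mono (zeta l) \<and> osup (range (zeta l)) = l"
begin

lemma bounded: "countable (A::'o set) \<Longrightarrow> \<exists>y. \<forall>a\<in>A. a < y"
proof -
  assume A: "countable A"
  have "countable (\<Union>a\<in>A. insert a {y. y < a})"
    using A cnt by (intro countable_UN) auto
  then have "(\<Union>a\<in>A. insert a {y. y < a}) \<noteq> UNIV" using unc by metis
  then obtain y where "y \<notin> (\<Union>a\<in>A. insert a {y. y < a})" by blast
  then show ?thesis by (auto intro!: exI[of _ y] simp: not_less)
qed

lemma less_osucc: "(x::'o) < osucc x"
proof -
  obtain y where "x < y" using bounded[of "{x}"] by auto
  then show ?thesis unfolding osucc_def by (rule LeastI)
qed

lemma less_osucc_iff: "(y::'o) < osucc x \<longleftrightarrow> y \<le> x"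
  using less_osucc[of x] osucc_le[of x y] by (metis leD leI order.strict_trans2)

lemma osucc_le_iff: "osucc (x::'o) \<le> y \<longleftrightarrow> x < y"
  using less_osucc_iff by (metis not_le)

lemma osucc_mono_iff[simp]: "osucc (x::'o) < osucc y \<longleftrightarrow> x < y"
  by (metis less_osucc_iff osucc_le_iff not_le)

lemma osucc_le_mono_iff[simp]: "osucc (x::'o) \<le> osucc y \<longleftrightarrow> x \<le> y"
  by (metis osucc_mono_iff not_le)

lemma osucc_inj[simp]: "osucc (x::'o) = osucc y \<longleftrightarrow> x = y"
  by (metis order.antisym osucc_le_mono_iff order_refl)

lemma osucc_ne_ozero[simp]: "osucc (x::'o) \<noteq> ozero"
  using less_osucc[of x] by (metis not_less_ozero)

lemma opred_osucc[simp]: "opred (osucc (x::'o)) = x"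
  unfolding opred_def by auto

lemma is_succ_osucc[simp]: "is_succ (osucc x)"
  unfolding is_succ_def by auto

lemma not_limit_osucc[simp]: "\<not> is_limit (osucc (x::'o))"
  unfolding is_limit_def using less_osucc[of x] by auto

lemma not_succ_ozero[simp]: "\<not> is_succ (ozero::'o)"
  unfolding is_succ_def by (metis osucc_ne_ozero)

lemma limit_not_succ: "is_limit (x::'o) \<Longrightarrow> \<not> is_succ x"
  unfolding is_succ_def by auto

lemma ord_cases:
  obtains "(x::'o) = ozero" | y where "x = osucc y" | "is_limit x"
proof -
  consider "x = ozero" | "is_limit x" | "x \<noteq> ozero" "\<not> is_limit x" by blast
  then show ?thesis
  proof cases
    case 3
    then obtain y where "y < x" "\<not> osucc y < x" unfolding is_limit_def by auto
    then have "x = osucc y" using osucc_le[of y x] by auto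
    then show ?thesis using that by blast
  qed (use that in auto)
qed

lemma ord_induct[case_names zero succ limit]:
  assumes "P ozero" "\<And>y. P y \<Longrightarrow> P (osucc y)"
    "\<And>x. is_limit x \<Longrightarrow> (\<And>y. y < x \<Longrightarrow> P y) \<Longrightarrow> P x"
  shows "P (x::'o)"
proof (induction x rule: less_induct)
  case (less x)
  show ?case
    by (rule ord_cases[of x]) (use assms less less_osucc in auto)
qed

lemma countable_below: "countable {b. b < (l::'o)}"
  using cnt by auto

lemma osup_ub: "countable (A::'o set) \<Longrightarrow> a \<in> A \<Longrightarrow> a \<le> osup A"
proof -
  assume "countable A" "a \<in> A"
  obtain y where y: "\<forall>a\<in>A. a < y" using bounded[OF \<open>countable A\<close>] by auto
  have "\<forall>a\<in>A. a \<le> osup A" unfolding osup_def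
    by (rule LeastI[of _ y]) (use y in auto)
  then show ?thesis using \<open>a \<in> A\<close> by auto
qed

lemma less_osup_iff: "countable (A::'o set) \<Longrightarrow> y < osup A \<longleftrightarrow> (\<exists>a\<in>A. y < a)"
  using osup_ub osup_least by (metis dual_order.strict_trans1 leI order.strict_iff_not)

lemma limit_osup: "is_limit (l::'o) \<Longrightarrow> osup {b. b < l} = l"
proof -
  assume l: "is_limit l"
  have "osup {b. b < l} \<le> l" by (rule osup_least) auto
  moreover have "\<not> osup {b. b < l} < l"
  proof
    assume "osup {b. b < l} < l"
    then have "osucc (osup {b. b < l}) < l" using l limit_osucc_less by auto
    then have "osucc (osup {b. b < l}) \<le> osup {b. b < l}"
      using osup_ub[OF countable_below] by auto
    then show False using less_osucc by (metis not_le)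
  qed
  ultimately show ?thesis by auto
qed


lemma orec_eq: "orec a g x = (if x = ozero then a else if is_succ x then g (orec a g (opred x))
      else osup (orec a g ` {b. b < (x::'o)}))"
proof -
  have "orec a g x = (if x = ozero then a else if is_succ x then g (cut (orec a g) {(x, y). x < y} x (opred x))
      else osup (cut (orec a g) {(x, y). x < y} x ` {b. b < x}))"
    unfolding orec_def by (subst wfrec) (auto intro: wf)
  also have "\<dots> = (if x = ozero then a else if is_succ x then g (orec a g (opred x))
      else osup (orec a g ` {b. b < (x::'o)}))"
  proof -
    have "is_succ x \<Longrightarrow> opred x < x" unfolding is_succ_def using less_osucc by auto
    moreover have "cut (orec a g) {(x, y). x < y} x ` {b. b < x} = orec a g ` {b. b < (x::'o)}"
      by (auto simp: cut_apply image_def)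
    ultimately show ?thesis by (auto simp: cut_apply)
  qed
  finally show ?thesis .
qed

lemma orec_0[simp]: "orec a g (ozero::'o) = a"
  by (subst orec_eq) simp

lemma orec_succ[simp]: "orec a g (osucc (b::'o)) = g (orec a g b)"
  by (subst orec_eq) simp

lemma orec_lim: "is_limit (l::'o) \<Longrightarrow> orec a g l = osup (orec a g ` {b. b < l})"
  by (subst orec_eq) (auto simp: limit_not_succ)

lemma orec_unique:
  assumes "f ozero = a" "\<forall>b. f (osucc b) = g (f b)"
    "\<forall>l. is_limit l \<longrightarrow> f l = osup (f ` {b. b < (l::'o)})"
  shows "f = orec a g"
proof
  fix x show "f x = orec a g x"
  proof (induction x rule: less_induct)
    case (less x)
    show ?case
    proof (cases x rule: ord_cases)
      case 3
      then have "f ` {b. b < x} = orec a g ` {b. b < x}" using less by auto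
      then show ?thesis using 3 assms orec_lim by auto
    qed (use assms less less_osucc in auto)
  qed
qed

lemma orec_THE: "(THE f. f ozero = a \<and> (\<forall>b. f (osucc b) = g (f b))
      \<and> (\<forall>l. is_limit l \<longrightarrow> f l = osup (f ` {b. b < (l::'o)}))) = orec a g"
  by (rule the_equality) (auto simp: orec_lim intro: orec_unique)

lemma oadd_orec: "oadd (a::'o) = orec a osucc"
  unfolding oadd_def by (rule orec_THE)

lemma oadd_0[simp]: "oadd a ozero = (a::'o)"
  by (simp add: oadd_orec)

lemma oadd_succ[simp]: "oadd a (osucc b) = osucc (oadd a (b::'o))"
  by (simp add: oadd_orec)

lemma oadd_lim: "is_limit (l::'o) \<Longrightarrow> oadd a l = osup (oadd a ` {b. b < l})"
  by (simp add: oadd_orec orec_lim)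

lemma omul_orec: "omul (a::'o) = orec ozero (\<lambda>x. oadd x a)"
  unfolding omul_def by (rule orec_THE)

lemma omul_0[simp]: "omul a ozero = (ozero::'o)"
  by (simp add: omul_orec)

lemma omul_succ[simp]: "omul a (osucc b) = oadd (omul a b) (a::'o)"
  by (simp add: omul_orec)

lemma omul_lim: "is_limit (l::'o) \<Longrightarrow> omul a l = osup (omul a ` {b. b < l})"
  by (simp add: omul_orec orec_lim)

lemma oexp_orec: "(oexp_omega :: 'o \<Rightarrow> 'o) = orec oone (\<lambda>x. omul x oomega)"
  unfolding oexp_omega_def by (rule orec_THE)

lemma oexp_0[simp]: "oexp_omega (ozero::'o) = oone"
  by (simp add: oexp_orec)

lemma oexp_succ[simp]: "oexp_omega (osucc b) = omul (oexp_omega b) (oomega::'o)"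
  by (simp add: oexp_orec)

lemma oexp_lim: "is_limit (l::'o) \<Longrightarrow> oexp_omega l = osup (oexp_omega ` {b. b < l})"
  by (simp add: oexp_orec orec_lim)

definition normal :: "('o \<Rightarrow> 'o) \<Rightarrow> bool" where
  "normal f \<longleftrightarrow> (\<forall>b. f b < f (osucc b)) \<and> (\<forall>l. is_limit l \<longrightarrow> f l = osup (f ` {b. b < l}))"

lemma normal_strict:
  assumes "normal f" shows "b < c \<Longrightarrow> f b < f c"
proof (induction c arbitrary: b rule: ord_induct)
  case zero then show ?case by simp
next
  case (succ y)
  then have "b \<le> y" by (simp add: less_osucc_iff)
  then show ?case using succ assms unfolding normal_def
    by (metis order_le_less order.strict_trans)
next
  case (limit x)
  then have "osucc b < x" by (simp add: limit_osucc_less)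
  then have "f (osucc b) \<le> f x" using assms limit unfolding normal_def
    by (metis (mono_tags, lifting) countable_below countable_image image_eqI mem_Collect_eq osup_ub)
  then show ?case using assms unfolding normal_def by (metis order.strict_trans2)
qed

lemma normal_less_iff: "normal f \<Longrightarrow> f b < f c \<longleftrightarrow> b < c"
  by (metis normal_strict not_less_iff_gr_or_eq order.asym)

lemma normal_le_iff: "normal f \<Longrightarrow> f b \<le> f c \<longleftrightarrow> b \<le> c"
  by (metis normal_less_iff not_le)

lemma normal_inj: "normal f \<Longrightarrow> f b = f c \<longleftrightarrow> b = c"
  by (metis normal_le_iff order.antisym order_refl)

lemma strict_ge: assumes "\<And>b c. b < c \<Longrightarrow> f b < f (c::'o)" shows "b \<le> f b"
proof (induction b rule: less_induct)
  case (less x)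
  show ?case
  proof (rule ccontr)
    assume "\<not> x \<le> f x"
    then have "f x < x" by auto
    then have "f (f x) < f x" using assms by auto
    moreover have "f x \<le> f (f x)" using less \<open>f x < x\<close> by auto
    ultimately show False by auto
  qed
qed

lemma normal_ge: "normal f \<Longrightarrow> b \<le> f b"
  by (rule strict_ge) (auto dest: normal_strict)

lemma normal_limit:
  assumes "normal f" "is_limit l" shows "is_limit (f l)"
  unfolding is_limit_def
proof (intro conjI allI impI)
  show "f l \<noteq> ozero" using assms normal_strict[OF assms(1) limit_pos[OF assms(2)]] by auto
next
  fix y assume "y < f l"
  then obtain b where b: "b < l" "y < f b"
    using assms unfolding normal_def by (auto simp: less_osup_iff countable_below)
  then have "osucc y \<le> f b" by (simp add: osucc_le_iff)
  also have "f b < f l" using b assms normal_strict by auto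
  finally show "osucc y < f l" .
qed

lemma normal_sup:
  assumes "normal f" "countable A" "A \<noteq> {}"
  shows "f (osup A) = osup (f ` A)"
proof (rule order.antisym)
  show "osup (f ` A) \<le> f (osup A)"
    by (rule osup_least) (use assms osup_ub normal_le_iff in blast)
next
  show "f (osup A) \<le> osup (f ` A)"
  proof (cases "osup A \<in> A")
    case True then show ?thesis using assms by (simp add: osup_ub)
  next
    case False
    have lim: "is_limit (osup A)" unfolding is_limit_def
    proof (intro conjI allI impI)
      show "osup A \<noteq> ozero" using False assms osup_ub by (metis all_not_in_conv le_ozero_iff)
      fix y assume "y < osup A"
      then obtain a where "a \<in> A" "y < a" using assms by (auto simp: less_osup_iff)
      then have "osucc y \<le> a" by (simp add: osucc_le_iff)
      moreover have "a < osup A" using \<open>a \<in> A\<close> False assms osup_ub by (metis order_le_less)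
      ultimately show "osucc y < osup A" by auto
    qed
    show ?thesis
      unfolding normal_def assms(1)[unfolded normal_def, THEN conjunct2, rule_format, OF lim]
    proof (rule osup_least)
      fix z assume "z \<in> f ` {b. b < osup A}"
      then obtain b where "b < osup A" "z = f b" by auto
      then obtain a where "a \<in> A" "b < a" using assms by (auto simp: less_osup_iff)
      then have "z \<le> f a" using \<open>z = f b\<close> assms normal_le_iff by auto
      also have "f a \<le> osup (f ` A)" using \<open>a \<in> A\<close> assms by (auto intro: osup_ub)
      finally show "z \<le> osup (f ` A)" .
    qed
  qed
qed

end


lemma onat_0[simp]: "onat 0 = ozero"
  by (simp add: onat_def)

lemma onat_Suc[simp]: "onat (Suc n) = osucc (onat n)"
  by (simp add: onat_def)

context om1
begin

declare oone_def[simp]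

lemma normal_oadd: "normal (oadd (a::'o))"
  unfolding normal_def by (auto simp: less_osucc oadd_lim)

lemma oadd_less_iff[simp]: "oadd (a::'o) b < oadd a c \<longleftrightarrow> b < c"
  by (rule normal_less_iff[OF normal_oadd])

lemma oadd_le_iff[simp]: "oadd (a::'o) b \<le> oadd a c \<longleftrightarrow> b \<le> c"
  by (rule normal_le_iff[OF normal_oadd])

lemma oadd_inj[simp]: "oadd (a::'o) b = oadd a c \<longleftrightarrow> b = c"
  by (rule normal_inj[OF normal_oadd])

lemma le_oadd2: "(b::'o) \<le> oadd a b"
  by (rule normal_ge[OF normal_oadd])

lemma le_oadd1: "(a::'o) \<le> oadd a b"
  using oadd_le_iff[of a ozero b] by simp

lemma ozero_oadd[simp]: "oadd ozero (a::'o) = a"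
proof (induction a rule: ord_induct)
  case (limit x)
  then have "oadd ozero ` {b. b < x} = {b. b < x}" by (auto simp: image_def)
  then show ?case using limit by (simp add: oadd_lim limit_osup)
qed auto

lemma oadd_assoc: "oadd (oadd a b) c = oadd a (oadd b (c::'o))"
proof (induction c rule: ord_induct)
  case (limit l)
  have "oadd (oadd a b) l = osup (oadd (oadd a b) ` {c. c < l})" using limit by (simp add: oadd_lim)
  also have "oadd (oadd a b) ` {c. c < l} = oadd a ` oadd b ` {c. c < l}"
    using limit by (auto simp: image_def)
  also have "osup \<dots> = oadd a (osup (oadd b ` {c. c < l}))"
    using limit_pos[OF limit(1)]
    by (intro normal_sup[symmetric] normal_oadd) (auto simp: countable_below)
  also have "\<dots> = oadd a (oadd b l)" using limit by (simp add: oadd_lim)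
  finally show ?case .
qed auto

lemma oadd_limit: "is_limit l \<Longrightarrow> is_limit (oadd (a::'o) l)"
  by (rule normal_limit[OF normal_oadd])

lemma oadd_pos: "ozero < (b::'o) \<Longrightarrow> a < oadd a b"
  using oadd_less_iff[of a ozero b] by simp

lemma osub: assumes "(a::'o) \<le> c" shows "\<exists>b. c = oadd a b"
proof -
  have ex: "\<exists>b. c \<le> oadd a b" using le_oadd2 by blast
  define b where "b = (LEAST b. c \<le> oadd a b)"
  have b1: "c \<le> oadd a b" unfolding b_def using ex by (metis LeastI)
  have b2: "\<And>b'. b' < b \<Longrightarrow> oadd a b' < c" unfolding b_def using not_less_Least by (metis not_le)
  have "oadd a b \<le> c"
  proof (cases b rule: ord_cases)
    case 1 then show ?thesis using assms by simp
  next
    case (2 y)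
    then have "oadd a y < c" using b2 less_osucc by auto
    then show ?thesis using 2 by (simp add: osucc_le_iff)
  next
    case 3
    show ?thesis unfolding oadd_lim[OF 3]
    proof (rule osup_least)
      fix z assume "z \<in> oadd a ` {b'. b' < b}"
      then show "z \<le> c" using b2 by (auto intro: less_imp_le)
    qed
  qed
  then show ?thesis using b1 by (metis order.antisym)
qed

lemma normal_omul: "ozero < (a::'o) \<Longrightarrow> normal (omul a)"
  unfolding normal_def by (auto simp: oadd_pos omul_lim)

lemma oone_pos[simp]: "ozero < (oone::'o)"
  by (simp add: oone_def less_osucc)

lemma omul_oone[simp]: "omul (a::'o) oone = a"
  by (simp add: oone_def)

lemma onat_1: "onat 1 = (oone::'o)"
  by (simp add: oone_def)

lemma omul_onat_add: "omul (a::'o) (onat (k + j)) = oadd (omul a (onat k)) (omul a (onat j))"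
  by (induction j) (auto simp: oadd_assoc)

lemma omul_pos: "ozero < (a::'o) \<Longrightarrow> ozero < b \<Longrightarrow> ozero < omul a b"
  using normal_strict[OF normal_omul, of a ozero b] by simp

lemma onat_strict: "strict_mono (onat :: nat \<Rightarrow> 'o)"
  by (rule strict_mono_Suc_iff[THEN iffD2]) (simp add: less_osucc)

lemma onat_less_iff[simp]: "(onat n :: 'o) < onat k \<longleftrightarrow> n < k"
  using onat_strict by (simp add: strict_mono_less)

lemma onat_le_iff[simp]: "(onat n :: 'o) \<le> onat k \<longleftrightarrow> n \<le> k"
  using onat_strict by (simp add: strict_mono_less_eq)

lemma onat_inj[simp]: "(onat n :: 'o) = onat k \<longleftrightarrow> n = k"
  by (metis onat_le_iff order.antisym order_refl)

lemma ex_limit: "\<exists>x::'o. is_limit x"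
proof -
  have "\<exists>y::'o. \<forall>n. onat n < y" using bounded[of "range onat"] by auto
  define w where "w = (LEAST y::'o. \<forall>n. onat n < y)"
  have w1: "\<forall>n. onat n < w" unfolding w_def using \<open>\<exists>y. _\<close> by (rule LeastI_ex)
  have w2: "\<exists>n. z \<le> onat n" if "z < w" for z
  proof -
    have "\<not> (\<forall>n. onat n < z)" using not_less_Least[of z "\<lambda>y. \<forall>n. onat n < y"] that w_def by blast
    then show ?thesis by (auto simp: not_less)
  qed
  have "is_limit w" unfolding is_limit_def
  proof (intro conjI allI impI)
    show "w \<noteq> ozero" using w1[rule_format, of 0] by auto
    fix z assume "z < w"
    then obtain n where "z \<le> onat n" using w2 by auto
    then have "osucc z \<le> onat (Suc n)" by simp
    then show "osucc z < w" using w1 by (metis order.strict_trans1)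
  qed
  then show ?thesis ..
qed

lemma oomega_limit: "is_limit (oomega::'o)"
  unfolding oomega_def using ex_limit by (rule LeastI_ex)

lemma oomega_least: "is_limit (x::'o) \<Longrightarrow> oomega \<le> x"
  unfolding oomega_def by (rule Least_le)

lemma onat_less_oomega[simp]: "(onat n :: 'o) < oomega"
  by (induction n) (auto simp: limit_pos oomega_limit limit_osucc_less)

lemma less_oomega_iff: "(b::'o) < oomega \<longleftrightarrow> (\<exists>n. b = onat n)"
proof
  show "b < oomega \<Longrightarrow> \<exists>n. b = onat n"
  proof (induction b rule: ord_induct)
    case zero then show ?case by (metis onat_0)
  next
    case (succ y)
    then have "y < oomega" using less_osucc by (metis order.strict_trans)
    then show ?case using succ by (metis onat_Suc)
  next
    case (limit x)
    then show ?case using oomega_least by (metis not_le)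
  qed
qed auto

lemma oone_less_oomega[simp]: "(oone::'o) < oomega"
  using onat_less_oomega[of 1] by (simp add: onat_1)

lemma oomega_pos[simp]: "ozero < (oomega::'o)"
  using limit_pos oomega_limit by blast

lemma oexp_pos: "ozero < oexp_omega (b::'o)"
proof (induction b rule: ord_induct)
  case (succ y) then show ?case by (simp add: omul_pos)
next
  case (limit x)
  have "oexp_omega ozero \<le> oexp_omega x" unfolding oexp_lim[OF limit(1)]
    using limit_pos[OF limit(1)] by (intro osup_ub) (auto simp: countable_below intro!: image_eqI[of _ _ ozero])
  then show ?case using less_osucc[of ozero] by (simp del: oone_def) (metis oone_def order.strict_trans2)
qed (simp add: less_osucc)

lemma normal_oexp: "normal (oexp_omega :: 'o \<Rightarrow> 'o)"
  unfolding normal_def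
proof (intro conjI allI impI)
  fix b :: 'o
  have "omul (oexp_omega b) oone < omul (oexp_omega b) oomega"
    using normal_strict[OF normal_omul[OF oexp_pos[of b]], of oone oomega] by (simp del: oone_def)
  then show "oexp_omega b < oexp_omega (osucc b)" by simp
qed (simp add: oexp_lim)

lemma oexp_less_iff[simp]: "oexp_omega (a::'o) < oexp_omega b \<longleftrightarrow> a < b"
  by (rule normal_less_iff[OF normal_oexp])

lemma oexp_le_iff[simp]: "oexp_omega (a::'o) \<le> oexp_omega b \<longleftrightarrow> a \<le> b"
  by (rule normal_le_iff[OF normal_oexp])

lemma omul_less_iff: "ozero < (a::'o) \<Longrightarrow> omul a b < omul a c \<longleftrightarrow> b < c"
  by (rule normal_less_iff[OF normal_omul])

lemma omul_le_iff: "ozero < (a::'o) \<Longrightarrow> omul a b \<le> omul a c \<longleftrightarrow> b \<le> c"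
  by (rule normal_le_iff[OF normal_omul])

lemma term_less_next: "omul (oexp_omega g) (onat n) < oexp_omega (osucc (g::'o))"
  by (simp add: omul_less_iff oexp_pos)

lemma oexp_le_term: "1 \<le> k \<Longrightarrow> oexp_omega g \<le> omul (oexp_omega (g::'o)) (onat k)"
proof -
  assume "1 \<le> k"
  then have "onat 1 \<le> (onat k :: 'o)" by (simp only: onat_le_iff)
  then have "omul (oexp_omega g) (onat 1) \<le> omul (oexp_omega g) (onat k)"
    by (simp only: omul_le_iff[OF oexp_pos])
  then show ?thesis by simp
qed

end


abbreviation oterm :: "'o::wellorder \<Rightarrow> nat \<Rightarrow> 'o" where
  "oterm g k \<equiv> omul (oexp_omega g) (onat k)"

lemma cnf_eval_Nil[simp]: "cnf_eval [] = ozero"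
  by (simp add: cnf_eval_def)

lemma cnf_eval_snoc: "cnf_eval (xs @ [(g, k)]) = oadd (cnf_eval xs) (oterm g k)"
  by (simp add: cnf_eval_def)

lemma cnf_valid_Cons: "cnf_valid ((g, k) # xs) \<longleftrightarrow> 1 \<le> k \<and> (\<forall>q\<in>set xs. fst q < g) \<and> cnf_valid xs"
  by (auto simp: cnf_valid_def)

lemma cnf_valid_Nil[simp]: "cnf_valid []"
  by (simp add: cnf_valid_def)

context om1
begin

declare oexp_succ[simp del]

lemma foldl_oadd: "foldl (\<lambda>acc (g, k). oadd acc (oterm g k)) (a::'o) xs
   = oadd a (foldl (\<lambda>acc (g, k). oadd acc (oterm g k)) ozero xs)"
proof (induction xs arbitrary: a)
  case (Cons x xs)
  obtain g k where x: "x = (g, k)" by fastforce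
  show ?case using Cons[of "oadd a (oterm g k)"] Cons[of "oadd ozero (oterm g k)"]
    by (simp add: x oadd_assoc)
qed simp

lemma cnf_eval_Cons: "cnf_eval ((g, k) # xs) = oadd (oterm g k) (cnf_eval xs :: 'o)"
  unfolding cnf_eval_def by (simp add: foldl_oadd[of "oterm g k"])

lemma oterm_Suc: "oterm g (Suc k) = oadd (oterm g k) (oexp_omega (g::'o))"
  using omul_onat_add[of "oexp_omega g" k 1] by simp

lemma cnf_bound: "cnf_valid xs \<Longrightarrow> (\<forall>p\<in>set xs. fst p < g) \<Longrightarrow> cnf_eval xs < oexp_omega (g::'o)"
proof (induction xs arbitrary: g)
  case Nil then show ?case by (simp add: oexp_pos)
next
  case (Cons p ys)
  obtain g' k' where p: "p = (g', k')" by fastforce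
  have "cnf_eval (p # ys) = oadd (oterm g' k') (cnf_eval ys)" by (simp add: p cnf_eval_Cons)
  also have "\<dots> < oadd (oterm g' k') (oexp_omega g')"
    using Cons by (simp add: p cnf_valid_Cons)
  also have "\<dots> = oterm g' (Suc k')" by (simp add: oterm_Suc)
  also have "\<dots> < oexp_omega (osucc g')" by (rule term_less_next)
  also have "\<dots> \<le> oexp_omega g" using Cons by (simp add: p osucc_le_iff)
  finally show ?case .
qed

lemma cnf_head_bounds:
  assumes "cnf_valid ((g, k) # ys)"
  shows "oterm g k \<le> cnf_eval ((g, k) # ys)" "cnf_eval ((g, k) # ys) < oterm g (Suc k)"
    "oexp_omega g \<le> cnf_eval ((g, k) # ys)" "cnf_eval ((g, k) # ys) < oexp_omega (osucc (g::'o))"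
proof -
  show 1: "oterm g k \<le> cnf_eval ((g, k) # ys)" by (simp add: cnf_eval_Cons le_oadd1)
  have "cnf_eval ys < oexp_omega g" using assms by (intro cnf_bound) (auto simp: cnf_valid_Cons)
  then show 2: "cnf_eval ((g, k) # ys) < oterm g (Suc k)" by (simp add: cnf_eval_Cons oterm_Suc)
  show "oexp_omega g \<le> cnf_eval ((g, k) # ys)"
    using 1 oexp_le_term[of k g] assms by (auto simp: cnf_valid_Cons)
  show "cnf_eval ((g, k) # ys) < oexp_omega (osucc (g::'o))"
    using 2 term_less_next by (metis order.strict_trans)
qed

lemma cnf_eval_pos: "cnf_valid xs \<Longrightarrow> xs \<noteq> [] \<Longrightarrow> ozero < (cnf_eval xs :: 'o)"
  using cnf_head_bounds(3) oexp_pos by (metis list.exhaust order.strict_trans2 prod.exhaust)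

lemma cnf_eval_0_iff: "cnf_valid xs \<Longrightarrow> (cnf_eval xs = (ozero::'o)) \<longleftrightarrow> xs = []"
  using cnf_eval_pos by fastforce

lemma cnf_uniq: "cnf_valid xs \<Longrightarrow> cnf_valid ys \<Longrightarrow> cnf_eval xs = (cnf_eval ys :: 'o) \<Longrightarrow> xs = ys"
proof (induction xs arbitrary: ys)
  case Nil then show ?case using cnf_eval_0_iff by (metis cnf_eval_Nil)
next
  case (Cons p xs)
  obtain g k where p: "p = (g, k)" by fastforce
  from Cons have "ys \<noteq> []" using cnf_eval_0_iff by (metis cnf_eval_Nil list.distinct(1))
  then obtain g' k' ys' where ysd: "ys = (g', k') # ys'" by (metis list.exhaust prod.exhaust)
  have vys: "cnf_valid ((g', k') # ys')" using Cons.prems ysd by simp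
  have vxs: "cnf_valid ((g, k) # xs)" using Cons.prems p by simp
  have b1: "oexp_omega g \<le> cnf_eval (p # xs)" "cnf_eval (p # xs) < oexp_omega (osucc g)"
    using cnf_head_bounds[OF vxs] p by auto
  have b2: "oexp_omega g' \<le> cnf_eval ys" "cnf_eval ys < oexp_omega (osucc g')"
    using cnf_head_bounds[OF vys] ysd by auto
  have gg: "g = g'"
  proof (rule ccontr)
    assume "g \<noteq> g'"
    then consider "g < g'" | "g' < g" by fastforce
    then show False
    proof cases
      case 1
      then have "oexp_omega (osucc g) \<le> oexp_omega g'" by (simp add: osucc_le_iff)
      then show False using b1 b2 Cons.prems by (metis leD order.strict_trans2)
    next
      case 2
      then have "oexp_omega (osucc g') \<le> oexp_omega g" by (simp add: osucc_le_iff)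
      then show False using b1 b2 Cons.prems by (metis leD order.strict_trans2)
    qed
  qed
  have c1: "oterm g k \<le> cnf_eval (p # xs)" "cnf_eval (p # xs) < oterm g (Suc k)"
    using cnf_head_bounds[OF vxs] p by auto
  have c2: "oterm g k' \<le> cnf_eval ys" "cnf_eval ys < oterm g (Suc k')"
    using cnf_head_bounds[OF vys] ysd gg by auto
  have kk: "k = k'"
  proof (rule ccontr)
    assume "k \<noteq> k'"
    then consider "Suc k \<le> k'" | "Suc k' \<le> k" by linarith
    then show False
    proof cases
      case 1
      then have "oterm g (Suc k) \<le> oterm g k'" by (simp only: omul_le_iff[OF oexp_pos] onat_le_iff)
      then show False using c1 c2 Cons.prems by (metis leD order.strict_trans2)
    next
      case 2
      then have "oterm g (Suc k') \<le> oterm g k" by (simp only: omul_le_iff[OF oexp_pos] onat_le_iff)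
      then show False using c1 c2 Cons.prems by (metis leD order.strict_trans2)
    qed
  qed
  have "cnf_eval xs = cnf_eval ys'"
    using Cons.prems by (simp add: p ysd gg kk cnf_eval_Cons)
  then have "xs = ys'" using Cons.IH Cons.prems by (simp add: p ysd cnf_valid_Cons)
  then show ?case by (simp add: p ysd gg kk)
qed

lemma cnf_valid_hd_max: "cnf_valid ((g, k) # ys) \<Longrightarrow> q \<in> set ys \<Longrightarrow> fst q < g"
  by (simp add: cnf_valid_Cons)

lemma cnf_exists: "\<exists>xs. cnf_valid xs \<and> cnf_eval xs = (a::'o)"
proof (induction a rule: less_induct)
  case (less a)
  show ?case
  proof (cases "a = ozero")
    case True then show ?thesis by (intro exI[of _ "[]"]) simp
  next
    case False
    have ex: "\<exists>g. a < oexp_omega g"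
      using normal_ge[OF normal_oexp, of a] less_osucc[of a] normal_strict[OF normal_oexp, of a "osucc a"]
      by (metis order.strict_trans1)
    define g0 where "g0 = (LEAST g. a < oexp_omega g)"
    have g0: "a < oexp_omega g0" unfolding g0_def using ex by (rule LeastI_ex)
    have g0l: "\<And>g. g < g0 \<Longrightarrow> oexp_omega g \<le> a"
      unfolding g0_def using not_less_Least not_less by metis
    obtain g where gg: "g0 = osucc g"
    proof (cases g0 rule: ord_cases)
      case 1 then show ?thesis using g0 False
        by (simp add: less_osucc_iff)
    next
      case 3
      then obtain b where "b < g0" "a < oexp_omega b" using g0
        by (auto simp: oexp_lim less_osup_iff countable_below)
      then show ?thesis using g0l by (metis leD)
    qed
    have ga: "oexp_omega g \<le> a" using g0l gg less_osucc by auto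
    have "a < osup (omul (oexp_omega g) ` {b. b < oomega})"
      using g0 gg by (simp add: omul_lim oomega_limit oexp_succ)
    then obtain b where "b < oomega" "a < omul (oexp_omega g) b"
      by (auto simp: less_osup_iff countable_below)
    then obtain n where "a < oterm g n" using less_oomega_iff by auto
    then have exn: "\<exists>n. a < oterm g n" ..
    define n0 where "n0 = (LEAST n. a < oterm g n)"
    have n0: "a < oterm g n0" unfolding n0_def using exn by (rule LeastI_ex)
    have n0l: "\<And>n. n < n0 \<Longrightarrow> oterm g n \<le> a"
      unfolding n0_def using not_less_Least not_less by metis
    have "n0 \<noteq> 0" using n0 by (cases n0) auto
    then obtain k where k: "n0 = Suc k" by (cases n0) auto
    have "k \<noteq> 0" using n0 ga k by (cases k) (auto simp: oterm_Suc)
    then have k1: "1 \<le> k" by simp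
    have ka: "oterm g k \<le> a" using n0l k by auto
    obtain r where r: "a = oadd (oterm g k) r" using osub[OF ka] by auto
    have "oadd (oterm g k) r < oadd (oterm g k) (oexp_omega g)"
      using n0 k r by (simp add: oterm_Suc)
    then have rg: "r < oexp_omega g" by simp
    then have "r < a" using ga by auto
    then obtain ys where ys: "cnf_valid ys" "cnf_eval ys = r" using less by auto
    have "\<forall>q\<in>set ys. fst q < g"
    proof (cases ys)
      case (Cons p ys')
      obtain g' k' where p: "p = (g', k')" by fastforce
      have "oexp_omega g' \<le> r" using cnf_head_bounds(3)[of g' k' ys'] ys by (simp add: Cons p)
      then have "g' < g" using rg by (metis oexp_less_iff order.strict_trans1)
      then show ?thesis using ys(1) by (auto simp: Cons p cnf_valid_Cons)
    qed simp
    then have "cnf_valid ((g, k) # ys)" using ys k1 by (simp add: cnf_valid_Cons)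
    moreover have "cnf_eval ((g, k) # ys) = a" using r ys by (simp add: cnf_eval_Cons)
    ultimately show ?thesis by blast
  qed
qed

lemma cnf_props: "cnf_valid (cnf a) \<and> cnf_eval (cnf a) = (a::'o)"
  unfolding cnf_def
  by (rule theI'[of "\<lambda>xs. cnf_valid xs \<and> cnf_eval xs = a"]) (use cnf_exists cnf_uniq in blast)

lemma cnf_valid_cnf[simp]: "cnf_valid (cnf (a::'o))" and cnf_eval_cnf[simp]: "cnf_eval (cnf (a::'o)) = a"
  using cnf_props by auto

lemma cnf_of_eval: "cnf_valid xs \<Longrightarrow> cnf (cnf_eval xs :: 'o) = xs"
  using cnf_uniq cnf_props by metis

lemma cnf_nonzero: "(a::'o) \<noteq> ozero \<Longrightarrow> cnf a \<noteq> []"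
  by (metis cnf_eval_cnf cnf_eval_Nil)

lemma ell_bounds:
  assumes "(a::'o) \<noteq> ozero"
  shows "oexp_omega (ell a) \<le> a" "a < oexp_omega (osucc (ell a))"
proof -
  obtain g k ys where c: "cnf a = (g, k) # ys" using cnf_nonzero[OF assms] by (metis list.exhaust prod.exhaust)
  have "ell a = g" using assms by (simp add: ell_def c)
  then show "oexp_omega (ell a) \<le> a" "a < oexp_omega (osucc (ell a))"
    using cnf_head_bounds(3,4)[of g k ys] cnf_valid_cnf[of a] cnf_eval_cnf[of a] by (simp_all add: c)
qed

lemma ell_mono: assumes "(x::'o) \<le> y" shows "ell x \<le> ell y"
proof (cases "x = ozero")
  case True then show ?thesis by (simp add: ell_def)
next
  case False
  then have "y \<noteq> ozero" using assms by auto
  show ?thesis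
  proof (rule ccontr)
    assume "\<not> ell x \<le> ell y"
    then have "osucc (ell y) \<le> ell x" by (simp add: osucc_le_iff)
    then have "oexp_omega (osucc (ell y)) \<le> x" using ell_bounds(1)[OF False] by (metis oexp_le_iff order.trans)
    then show False using ell_bounds(2)[OF \<open>y \<noteq> ozero\<close>] assms by (metis leD order.strict_trans2)
  qed
qed

end


definition hatX :: "('o::wellorder \<Rightarrow> nat \<Rightarrow> 'o) \<Rightarrow> 'o \<Rightarrow> nat \<Rightarrow> 'o" where
  "hatX zeta bk n = (if is_succ bk then omul (oexp_omega (opred bk)) (onat n) else oexp_omega (zeta bk n))"

lemma hat_split:
  assumes "cnf b = pre @ [(bk, mk)]"
  shows "hat zeta b n = oadd (cnf_eval (pre @ [(bk, mk - 1)])) (hatX zeta bk n)"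
  using assms by (simp add: hat_def Let_def hatX_def)

context om1
begin

declare oexp_succ[simp del]

lemma cnf_eval_single: "cnf_eval [(g, k)] = (oterm g k :: 'o)"
  by (simp add: cnf_eval_Cons)

lemma cnf_last:
  assumes "(b::'o) \<noteq> ozero"
  obtains pre bk mk where "cnf b = pre @ [(bk, mk)]" "1 \<le> mk"
    "b = oadd (cnf_eval (pre @ [(bk, mk - 1)])) (oexp_omega bk)"
proof -
  have "cnf b \<noteq> []" using cnf_nonzero[OF assms] .
  then obtain pre bk mk where c: "cnf b = pre @ [(bk, mk)]" by (metis rev_exhaust prod.exhaust)
  have "1 \<le> mk" using cnf_valid_cnf[of b] by (simp add: c cnf_valid_def)
  then obtain j where j: "mk = Suc j" by (cases mk) auto
  have "b = cnf_eval (pre @ [(bk, mk)])" using cnf_eval_cnf[of b] by (simp add: c)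
  also have "\<dots> = oadd (cnf_eval (pre @ [(bk, mk - 1)])) (oexp_omega bk)"
    by (simp add: cnf_eval_snoc j oterm_Suc oadd_assoc)
  finally show ?thesis using that c \<open>1 \<le> mk\<close> by blast
qed

lemma zeta_less: "is_limit l \<Longrightarrow> zeta l n < (l::'o)"
proof -
  assume l: "is_limit l"
  then have sm: "strict_mono (zeta l)" and sup: "osup (range (zeta l)) = l" using zeta_ok by auto
  have "zeta l n < zeta l (Suc n)" using sm by (simp add: strict_mono_def)
  also have "zeta l (Suc n) \<le> osup (range (zeta l))" by (rule osup_ub) auto
  finally show ?thesis using sup by simp
qed

lemma hat_less:
  assumes l: "is_limit (l::'o)"
  shows "hat zeta l n < l"
proof -
  have "l \<noteq> ozero" using l by auto
  then obtain pre bk mk where c: "cnf l = pre @ [(bk, mk)]"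
    and e: "l = oadd (cnf_eval (pre @ [(bk, mk - 1)])) (oexp_omega bk)" by (rule cnf_last)
  have "bk \<noteq> ozero"
  proof
    assume "bk = ozero"
    then have "l = osucc (cnf_eval (pre @ [(bk, mk - 1)]))" using e by (simp add: oone_def)
    then show False using l by simp
  qed
  have X: "hatX zeta bk n < oexp_omega bk"
  proof (cases bk rule: ord_cases)
    case 1 then show ?thesis using \<open>bk \<noteq> ozero\<close> by simp
  next
    case (2 p) then show ?thesis by (simp add: hatX_def term_less_next)
  next
    case 3 then show ?thesis by (simp add: hatX_def limit_not_succ zeta_less)
  qed
  have "hat zeta l n = oadd (cnf_eval (pre @ [(bk, mk - 1)])) (hatX zeta bk n)" by (rule hat_split[OF c])
  also have "\<dots> < l" using X e by (metis oadd_less_iff)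
  finally show ?thesis .
qed

lemma hat_shift:
  assumes l: "is_limit (a::'o)" and ell: "ell a \<le> \<eta>" and m: "1 \<le> m"
  shows "hat zeta (oadd (oterm \<eta> m) a) n = oadd (oterm \<eta> m) (hat zeta a n)"
proof -
  have "a \<noteq> ozero" using l by auto
  then obtain pre bk mk where c: "cnf a = pre @ [(bk, mk)]" and mk: "1 \<le> mk"
    using cnf_last by metis
  have va: "cnf_valid (pre @ [(bk, mk)])" using cnf_valid_cnf[of a] c by simp
  have ea: "cnf_eval (pre @ [(bk, mk)]) = a" using cnf_eval_cnf[of a] c by simp
  obtain g1 k1 ys where xs: "pre @ [(bk, mk)] = (g1, k1) # ys" by (metis append_is_Nil_conv neq_Nil_conv prod.exhaust)
  have g1: "g1 \<le> \<eta>" using ell \<open>a \<noteq> ozero\<close> c xs by (simp add: ell_def)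
  have hs: "hat zeta a n = oadd (cnf_eval (pre @ [(bk, mk - 1)])) (hatX zeta bk n)" by (rule hat_split[OF c])
  show ?thesis
  proof (cases "g1 < \<eta>")
    case True
    have v: "cnf_valid ((\<eta>, m) # pre @ [(bk, mk)])"
      using va m True unfolding xs by (auto simp: cnf_valid_Cons)
    have "cnf_eval ((\<eta>, m) # pre @ [(bk, mk)]) = oadd (oterm \<eta> m) a"
      using ea by (simp add: cnf_eval_Cons)
    then have "cnf (oadd (oterm \<eta> m) a) = ((\<eta>, m) # pre) @ [(bk, mk)]"
      using cnf_of_eval[OF v] by simp
    then have "hat zeta (oadd (oterm \<eta> m) a) n = oadd (cnf_eval ((\<eta>, m) # pre @ [(bk, mk - 1)])) (hatX zeta bk n)"
      using hat_split by fastforce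
    then show ?thesis using hs by (simp add: cnf_eval_Cons oadd_assoc)
  next
    case False
    then have g1e: "g1 = \<eta>" using g1 by auto
    have k1: "1 \<le> k1" using va xs by (simp add: cnf_valid_Cons)
    have v: "cnf_valid ((\<eta>, m + k1) # ys)"
      using va m g1e unfolding xs by (auto simp: cnf_valid_Cons)
    have "cnf_eval ((\<eta>, m + k1) # ys) = oadd (oterm \<eta> m) (oadd (oterm \<eta> k1) (cnf_eval ys))"
      by (simp add: cnf_eval_Cons omul_onat_add oadd_assoc)
    also have "\<dots> = oadd (oterm \<eta> m) a" using ea xs g1e by (simp add: cnf_eval_Cons)
    finally have cb: "cnf (oadd (oterm \<eta> m) a) = (\<eta>, m + k1) # ys" using cnf_of_eval[OF v] by simp
    show ?thesis
    proof (cases pre)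
      case Nil
      then have "ys = []" "bk = \<eta>" "mk = k1" using xs g1e by auto
      then have "cnf (oadd (oterm \<eta> m) a) = [] @ [(\<eta>, m + k1)]" using cb by simp
      then have "hat zeta (oadd (oterm \<eta> m) a) n = oadd (cnf_eval [(\<eta>, m + k1 - 1)]) (hatX zeta \<eta> n)"
        using hat_split by fastforce
      moreover have "m + k1 - 1 = m + (k1 - 1)" using k1 by simp
      ultimately show ?thesis using hs Nil \<open>bk = \<eta>\<close> \<open>mk = k1\<close>
        by (simp add: cnf_eval_single omul_onat_add oadd_assoc)
    next
      case (Cons p pre')
      then have p: "p = (\<eta>, k1)" and ys: "ys = pre' @ [(bk, mk)]" using xs g1e by auto
      then have "cnf (oadd (oterm \<eta> m) a) = ((\<eta>, m + k1) # pre') @ [(bk, mk)]" using cb by simp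
      then have "hat zeta (oadd (oterm \<eta> m) a) n = oadd (cnf_eval ((\<eta>, m + k1) # pre' @ [(bk, mk - 1)])) (hatX zeta bk n)"
        using hat_split by fastforce
      then show ?thesis using hs Cons p
        by (simp add: cnf_eval_Cons omul_onat_add oadd_assoc)
    qed
  qed
qed

end


definition schF :: "('o::wellorder \<Rightarrow> nat \<Rightarrow> 'o) \<Rightarrow> ('o \<Rightarrow> nat set set) \<Rightarrow> 'o \<Rightarrow> nat set set" where
  "schF zeta h x = (if x = ozero then schreier0 else if is_succ x then fam_comp schreier1 (h (opred x))
     else {{}} \<union> {F. F \<noteq> {} \<and> (\<exists>n. 1 \<le> n \<and> n \<le> Min F \<and> F \<in> h (hat zeta x n))})"

context om1
begin

definition schR :: "'o \<Rightarrow> nat set set" where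
  "schR = wfrec {(x, y). x < y} (schF zeta)"

lemma schR_eq: "schR x = schF zeta schR x"
proof -
  have "schR x = schF zeta (cut schR {(x, y). x < y} x) x"
    unfolding schR_def by (subst wfrec) (auto intro: wf)
  also have "\<dots> = schF zeta schR x"
  proof -
    have "is_succ x \<Longrightarrow> opred x < x" unfolding is_succ_def using less_osucc by auto
    moreover have "\<not> is_succ x \<Longrightarrow> x \<noteq> ozero \<Longrightarrow> is_limit x"
      by (cases x rule: ord_cases) auto
    ultimately show ?thesis unfolding schF_def by (auto simp: cut_apply hat_less)
  qed
  finally show ?thesis .
qed

lemma schR_rec: "schreier_rec zeta schR"
  unfolding schreier_rec_def
proof (intro conjI allI impI)
  show "schR ozero = schreier0" by (subst schR_eq) (simp add: schF_def)
  fix b show "schR (osucc b) = fam_comp schreier1 (schR b)" by (subst schR_eq) (simp add: schF_def)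
next
  fix l :: 'o assume "is_limit l"
  show "schR l = {{}} \<union> {F. F \<noteq> {} \<and> (\<exists>n. 1 \<le> n \<and> n \<le> Min F \<and> F \<in> schR (hat zeta l n))}"
  proof -
    have ne: "l \<noteq> ozero" using \<open>is_limit l\<close> by auto
    show ?thesis using \<open>is_limit l\<close> by (subst schR_eq) (simp add: schF_def limit_not_succ ne)
  qed
qed

lemma schreier_rec_unique: "schreier_rec zeta S \<Longrightarrow> S = schR"
proof
  fix x assume S: "schreier_rec zeta S"
  note S' = S[unfolded schreier_rec_def] and R' = schR_rec[unfolded schreier_rec_def]
  show "S x = schR x"
  proof (induction x rule: less_induct)
    case (less x)
    show ?case
    proof (cases x rule: ord_cases)
      case 1 then show ?thesis using S' R' by simp
    next
      case (2 y)
      then have "S y = schR y" using less less_osucc by auto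
      then show ?thesis using S'[THEN conjunct2, THEN conjunct1, rule_format, of y]
          R'[THEN conjunct2, THEN conjunct1, rule_format, of y] 2 by simp
    next
      case 3
      then have "\<And>n. S (hat zeta x n) = schR (hat zeta x n)" using less hat_less by auto
      then show ?thesis using S'[THEN conjunct2, THEN conjunct2, rule_format, OF 3]
          R'[THEN conjunct2, THEN conjunct2, rule_format, OF 3] by (simp only:)
    qed
  qed
qed

lemma schreier_eq: "schreier zeta = schR"
  unfolding schreier_def by (rule the_equality[where P="schreier_rec zeta", OF schR_rec schreier_rec_unique])

lemma sch_0: "schreier zeta ozero = schreier0"
  unfolding schreier_eq using schR_rec[unfolded schreier_rec_def] by (rule conjunct1)

lemma sch_succ: "schreier zeta (osucc b) = fam_comp schreier1 (schreier zeta b)"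
  unfolding schreier_eq using schR_rec[unfolded schreier_rec_def, THEN conjunct2, THEN conjunct1] by (rule spec)

lemma sch_lim: "is_limit l \<Longrightarrow> schreier zeta l =
   {{}} \<union> {F. F \<noteq> {} \<and> (\<exists>n. 1 \<le> n \<and> n \<le> Min F \<and> F \<in> schreier zeta (hat zeta l n))}"
  unfolding schreier_eq using schR_rec[unfolded schreier_rec_def, THEN conjunct2, THEN conjunct2] by blast

end


definition sep :: "nat set set \<Rightarrow> bool" where
  "sep FF \<longleftrightarrow> finite FF \<and> (\<forall>F\<in>FF. F \<noteq> {} \<and> finite F)
     \<and> (\<forall>E\<in>FF. \<forall>F\<in>FF. E \<noteq> F \<longrightarrow> fset_less E F \<or> fset_less F E)"

definition fc :: "nat set set \<Rightarrow> nat set set \<Rightarrow> nat set set" where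
  "fc M N = {\<Union>FF | FF. sep FF \<and> FF \<subseteq> N \<and> Min ` FF \<in> M}"

lemma fset_less_iff:
  "finite E \<Longrightarrow> finite F \<Longrightarrow> E \<noteq> {} \<Longrightarrow> F \<noteq> {} \<Longrightarrow> fset_less E F \<longleftrightarrow> (\<forall>x\<in>E. \<forall>y\<in>F. x < y)"
  by (simp add: fset_less_def Max_less_iff Min_gr_iff) blast

lemma sorted_wrt_pair: "sorted_wrt P xs \<Longrightarrow> x \<in> set xs \<Longrightarrow> y \<in> set xs \<Longrightarrow> x \<noteq> y \<Longrightarrow> P x y \<or> P y x"
  by (induction xs) auto

lemma Min_le_Max': "finite E \<Longrightarrow> E \<noteq> {} \<Longrightarrow> Min E \<le> (Max E :: nat)"
  by (simp add: Max_ge)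

lemma sep_Min_inj: "sep FF \<Longrightarrow> E \<in> FF \<Longrightarrow> F \<in> FF \<Longrightarrow> Min E = Min F \<Longrightarrow> E = F"
proof (rule ccontr)
  assume a: "sep FF" "E \<in> FF" "F \<in> FF" "Min E = Min F" "E \<noteq> F"
  then have "Max E < Min F \<or> Max F < Min E" unfolding sep_def fset_less_def by blast
  moreover have "Min E \<le> Max E" "Min F \<le> Max F" using a unfolding sep_def by (blast intro: Min_le_Max')+
  ultimately show False using a(4) by linarith
qed

lemma sep_order: "sep FF \<Longrightarrow> E \<in> FF \<Longrightarrow> F \<in> FF \<Longrightarrow> Min E < Min F \<Longrightarrow> fset_less E F"
proof -
  assume a: "sep FF" "E \<in> FF" "F \<in> FF" "Min E < Min F"
  then have "E \<noteq> F" by auto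
  then have "Max E < Min F \<or> Max F < Min E" using a unfolding sep_def fset_less_def by blast
  moreover have "Min F \<le> Max F" using a unfolding sep_def by (blast intro: Min_le_Max')
  ultimately show "fset_less E F" using a(4) unfolding fset_less_def by linarith
qed

lemma fam_comp_fc: "fam_comp M N = fc M N"
proof (intro set_eqI iffI)
  fix G assume "G \<in> fam_comp M N"
  then obtain Fs where G: "G = \<Union>(set Fs)" and Fs: "\<forall>F\<in>set Fs. F \<in> N \<and> F \<noteq> {} \<and> finite F"
    "sorted_wrt fset_less Fs" "set (map Min Fs) \<in> M" unfolding fam_comp_def by auto
  have "sep (set Fs)" unfolding sep_def using Fs sorted_wrt_pair[OF Fs(2)] by auto
  then show "G \<in> fc M N" unfolding fc_def using G Fs by auto
next
  fix G assume "G \<in> fc M N"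
  then obtain FF where G: "G = \<Union>FF" and FF: "sep FF" "FF \<subseteq> N" "Min ` FF \<in> M" unfolding fc_def by auto
  define sel where "sel n = (THE F. F \<in> FF \<and> Min F = n)" for n
  have sel: "F \<in> FF \<Longrightarrow> sel (Min F) = F" for F
    unfolding sel_def by (rule the_equality) (use sep_Min_inj[OF FF(1)] in auto)
  have fin: "finite (Min ` FF)" using FF(1) by (simp add: sep_def)
  define Fs where "Fs = map sel (sorted_list_of_set (Min ` FF))"
  have setFs: "set Fs = FF" unfolding Fs_def using fin sel by (auto simp: image_def)
  have mFs: "map Min Fs = sorted_list_of_set (Min ` FF)"
    unfolding Fs_def map_map by (rule map_idI) (use fin sel in auto)
  have "sorted_wrt fset_less Fs"
    unfolding Fs_def sorted_wrt_map
    by (rule sorted_wrt_mono_rel[OF _ strict_sorted_list_of_set])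
       (use fin sel sep_order[OF FF(1)] in auto)
  moreover have "\<forall>F\<in>set Fs. F \<in> N \<and> F \<noteq> {} \<and> finite F" using setFs FF by (auto simp: sep_def)
  moreover have "set (map Min Fs) \<in> M" using mFs fin FF by simp
  ultimately show "G \<in> fam_comp M N" unfolding fam_comp_def using G setFs by blast
qed

lemma sep_Min_Union: "sep FF \<Longrightarrow> FF \<noteq> {} \<Longrightarrow> Min (\<Union>FF) = Min (Min ` FF)"
proof -
  assume a: "sep FF" "FF \<noteq> {}"
  then have fin: "finite FF" "\<And>F. F \<in> FF \<Longrightarrow> F \<noteq> {} \<and> finite F" unfolding sep_def by auto
  have u: "finite (\<Union>FF)" "\<Union>FF \<noteq> {}" using fin a(2) by auto
  have i: "finite (Min ` FF)" "Min ` FF \<noteq> {}" using fin a(2) by auto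
  obtain F where F: "F \<in> FF" "Min (\<Union>FF) \<in> F" using Min_in[OF u] by auto
  obtain F0 where F0: "F0 \<in> FF" "Min (Min ` FF) = Min F0" using Min_in[OF i] by auto
  have "Min (Min ` FF) \<le> Min F" using F i by (intro Min_le) auto
  also have "Min F \<le> Min (\<Union>FF)" using F fin by (intro Min_le) auto
  finally have 1: "Min (Min ` FF) \<le> Min (\<Union>FF)" .
  have "Min F0 \<in> \<Union>FF" using F0 fin Min_in by blast
  then have "Min (\<Union>FF) \<le> Min F0" using u by (intro Min_le) auto
  then show ?thesis using 1 F0 by linarith
qed

lemma sep_Union_finite: "sep FF \<Longrightarrow> finite (\<Union>FF)"
  unfolding sep_def by auto

lemma sep_Union_empty: "sep FF \<Longrightarrow> \<Union>FF = {} \<longleftrightarrow> FF = {}"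
  unfolding sep_def by auto

lemma sep_empty[simp]: "sep {}"
  unfolding sep_def by auto

lemma sep_subset: "sep FF \<Longrightarrow> GG \<subseteq> FF \<Longrightarrow> sep GG"
proof -
  assume a: "sep FF" "GG \<subseteq> FF"
  have "finite GG" using a finite_subset unfolding sep_def by auto
  moreover have "\<forall>F\<in>GG. F \<noteq> {} \<and> finite F" using a unfolding sep_def by (auto simp del: fset_less_def)
  moreover have "\<forall>E\<in>GG. \<forall>F\<in>GG. E \<noteq> F \<longrightarrow> fset_less E F \<or> fset_less F E"
    using a unfolding sep_def by (meson subsetD)
  ultimately show ?thesis unfolding sep_def by blast
qed

lemma sep_singleton: "F \<noteq> {} \<Longrightarrow> finite F \<Longrightarrow> sep {F}"
  unfolding sep_def by auto


lemma sep_elem: "sep FF \<Longrightarrow> F \<in> FF \<Longrightarrow> F \<noteq> {} \<and> finite F"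
  unfolding sep_def by blast

lemma sep_lt: "sep FF \<Longrightarrow> E \<in> FF \<Longrightarrow> F \<in> FF \<Longrightarrow> E \<noteq> F \<Longrightarrow>
   (\<forall>x\<in>E. \<forall>y\<in>F. x < y) \<or> (\<forall>x\<in>F. \<forall>y\<in>E. x < y)"
proof -
  assume a: "sep FF" "E \<in> FF" "F \<in> FF" "E \<noteq> F"
  then have "fset_less E F \<or> fset_less F E" unfolding sep_def by blast
  moreover have "fset_less E F \<longleftrightarrow> (\<forall>x\<in>E. \<forall>y\<in>F. x < y)" "fset_less F E \<longleftrightarrow> (\<forall>x\<in>F. \<forall>y\<in>E. x < y)"
    using fset_less_iff sep_elem[OF a(1) a(2)] sep_elem[OF a(1) a(3)] by auto
  ultimately show ?thesis by simp
qed

lemma sep_intro: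
  assumes "finite FF" "\<And>F. F \<in> FF \<Longrightarrow> F \<noteq> {} \<and> finite F"
    "\<And>E F. E \<in> FF \<Longrightarrow> F \<in> FF \<Longrightarrow> E \<noteq> F \<Longrightarrow> (\<forall>x\<in>E. \<forall>y\<in>F. x < y) \<or> (\<forall>x\<in>F. \<forall>y\<in>E. x < y)"
  shows "sep FF"
  unfolding sep_def
proof (intro conjI ballI impI)
  fix E F assume a: "E \<in> FF" "F \<in> FF" "E \<noteq> F"
  have "fset_less E F \<longleftrightarrow> (\<forall>x\<in>E. \<forall>y\<in>F. x < y)" "fset_less F E \<longleftrightarrow> (\<forall>x\<in>F. \<forall>y\<in>E. x < y)"
    using fset_less_iff assms(2)[OF a(1)] assms(2)[OF a(2)] by auto
  then show "fset_less E F \<or> fset_less F E" using assms(3)[OF a] by simp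
next
  show "finite FF" by (rule assms(1))
next
  fix F assume "F \<in> FF" then show "F \<noteq> {}" "finite F" using assms(2) by auto
qed

lemma fc_assoc1: "fc (fc L M) N \<subseteq> fc L (fc M N)"
proof
  fix G assume "G \<in> fc (fc L M) N"
  then obtain FF where G: "G = \<Union>FF" and FF: "sep FF" "FF \<subseteq> N" "Min ` FF \<in> fc L M"
    unfolding fc_def by blast
  then obtain EE where EE: "Min ` FF = \<Union>EE" "sep EE" "EE \<subseteq> M" "Min ` EE \<in> L"
    unfolding fc_def by blast
  define blk where "blk E = {F \<in> FF. Min F \<in> E}" for E
  define GG where "GG = (\<lambda>E. \<Union>(blk E)) ` EE"
  have blkmin: "Min ` blk E = E" if "E \<in> EE" for E
  proof
    show "Min ` blk E \<subseteq> E" unfolding blk_def by auto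
    show "E \<subseteq> Min ` blk E"
    proof
      fix x assume "x \<in> E"
      then have "x \<in> Min ` FF" using EE(1) that by blast
      then obtain F where "F \<in> FF" "x = Min F" by blast
      then show "x \<in> Min ` blk E" unfolding blk_def using \<open>x \<in> E\<close> by blast
    qed
  qed
  have blk_ne: "blk E \<noteq> {}" if "E \<in> EE" for E
    using blkmin[OF that] sep_elem[OF EE(2) that] by auto
  have blk_sep: "sep (blk E)" for E
    by (rule sep_subset[OF FF(1)]) (auto simp: blk_def)
  have minG: "Min (\<Union>(blk E)) = Min E" if "E \<in> EE" for E
    using sep_Min_Union[OF blk_sep blk_ne[OF that]] blkmin[OF that] by simp
  have "GG \<subseteq> fc M N"
  proof
    fix X assume "X \<in> GG"
    then obtain E where E: "E \<in> EE" "X = \<Union>(blk E)" unfolding GG_def by blast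
    have "blk E \<subseteq> N" using FF(2) unfolding blk_def by blast
    moreover have "Min ` blk E \<in> M" using blkmin[OF E(1)] E(1) EE(3) by auto
    ultimately show "X \<in> fc M N" unfolding fc_def using E(2) blk_sep by blast
  qed
  moreover have "sep GG"
  proof (rule sep_intro)
    show "finite GG" unfolding GG_def using EE(2) by (simp add: sep_def)
    fix X assume "X \<in> GG"
    then obtain E where E: "E \<in> EE" "X = \<Union>(blk E)" unfolding GG_def by blast
    then show "X \<noteq> {} \<and> finite X"
      using blk_ne[OF E(1)] blk_sep sep_Union_empty sep_Union_finite by blast
  next
    have blk_lt: "\<forall>x\<in>\<Union>(blk E). \<forall>y\<in>\<Union>(blk E'). x < y"
      if "E \<in> EE" "E' \<in> EE" "\<forall>a\<in>E. \<forall>b\<in>E'. a < b" for E E'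
    proof (intro ballI)
      fix x y assume "x \<in> \<Union>(blk E)" "y \<in> \<Union>(blk E')"
      then obtain F F' where F: "F \<in> FF" "Min F \<in> E" "x \<in> F" and F': "F' \<in> FF" "Min F' \<in> E'" "y \<in> F'"
        unfolding blk_def by blast
      have "Min F < Min F'" using F F' that(3) by blast
      then have "fset_less F F'" using sep_order[OF FF(1) F(1) F'(1)] by blast
      then show "x < y" using fset_less_iff sep_elem[OF FF(1) F(1)] sep_elem[OF FF(1) F'(1)] F(3) F'(3) by blast
    qed
    fix X Y assume "X \<in> GG" "Y \<in> GG" "X \<noteq> Y"
    then obtain E E' where E: "E \<in> EE" "X = \<Union>(blk E)" "E' \<in> EE" "Y = \<Union>(blk E')" unfolding GG_def by blast
    then have "E \<noteq> E'" using \<open>X \<noteq> Y\<close> by blast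
    then have "(\<forall>a\<in>E. \<forall>b\<in>E'. a < b) \<or> (\<forall>a\<in>E'. \<forall>b\<in>E. a < b)" using sep_lt[OF EE(2) E(1) E(3)] by blast
    then show "(\<forall>x\<in>X. \<forall>y\<in>Y. x < y) \<or> (\<forall>x\<in>Y. \<forall>y\<in>X. x < y)"
      using blk_lt[OF E(1) E(3)] blk_lt[OF E(3) E(1)] E(2,4) by blast
  qed
  moreover have "Min ` GG = Min ` EE"
    unfolding GG_def image_image using minG by (auto simp: image_def)
  moreover have "\<Union>GG = G"
  proof
    show "\<Union>GG \<subseteq> G" unfolding GG_def blk_def G by blast
    show "G \<subseteq> \<Union>GG"
    proof
      fix x assume "x \<in> G"
      then obtain F where F: "F \<in> FF" "x \<in> F" using G by blast
      then have "Min F \<in> \<Union>EE" using EE(1) by blast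
      then obtain E where "E \<in> EE" "Min F \<in> E" by blast
      then show "x \<in> \<Union>GG" unfolding GG_def blk_def using F by blast
    qed
  qed
  ultimately show "G \<in> fc L (fc M N)" unfolding fc_def using EE(4) by (metis (mono_tags, lifting) mem_Collect_eq)
qed

lemma fc_assoc2: "fc L (fc M N) \<subseteq> fc (fc L M) N"
proof
  fix G assume "G \<in> fc L (fc M N)"
  then obtain GG where G: "G = \<Union>GG" and GG: "sep GG" "GG \<subseteq> fc M N" "Min ` GG \<in> L"
    unfolding fc_def by blast
  have "\<forall>X\<in>GG. \<exists>FF. X = \<Union>FF \<and> sep FF \<and> FF \<subseteq> N \<and> Min ` FF \<in> M"
    using GG(2) unfolding fc_def by blast
  then have "\<exists>f. \<forall>X\<in>GG. X = \<Union>(f X) \<and> sep (f X) \<and> f X \<subseteq> N \<and> Min ` f X \<in> M"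
    by (rule bchoice)
  then obtain f where f0: "\<forall>X\<in>GG. X = \<Union>(f X) \<and> sep (f X) \<and> f X \<subseteq> N \<and> Min ` f X \<in> M"
    by (elim exE)
  have f: "\<Union>(f X) = X \<and> sep (f X) \<and> f X \<subseteq> N \<and> Min ` f X \<in> M" if "X \<in> GG" for X
    using f0 that by auto
  define FFa where "FFa = \<Union>(f ` GG)"
  define EE where "EE = (\<lambda>X. Min ` f X) ` GG"
  have fne: "f X \<noteq> {}" if "X \<in> GG" for X
  proof
    assume "f X = {}"
    then have "X = {}" using f[OF that] by auto
    then show False using sep_elem[OF GG(1) that] by auto
  qed
  have sub: "F \<subseteq> X" if "X \<in> GG" "F \<in> f X" for X F using f[OF that(1)] that(2) by blast
  have GGfin: "finite GG" using GG(1) by (simp add: sep_def)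
  have "sep FFa"
  proof (rule sep_intro)
    show "finite FFa" unfolding FFa_def
    proof (rule finite_Union)
      show "finite (f ` GG)" using GGfin by simp
      fix Z assume "Z \<in> f ` GG"
      then obtain X where "X \<in> GG" "Z = f X" by blast
      then show "finite Z" using f[of X] by (simp add: sep_def)
    qed
    fix F assume "F \<in> FFa"
    then obtain X where "X \<in> GG" "F \<in> f X" unfolding FFa_def by blast
    then show "F \<noteq> {} \<and> finite F" using f[of X] sep_elem[of "f X" F] by blast
  next
    fix F F' assume "F \<in> FFa" "F' \<in> FFa" "F \<noteq> F'"
    then obtain X Y where X: "X \<in> GG" "F \<in> f X" and Y: "Y \<in> GG" "F' \<in> f Y" unfolding FFa_def by blast
    show "(\<forall>x\<in>F. \<forall>y\<in>F'. x < y) \<or> (\<forall>x\<in>F'. \<forall>y\<in>F. x < y)"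
    proof (cases "X = Y")
      case True
      have "sep (f X)" using f[OF X(1)] by blast
      then show ?thesis using sep_lt[of "f X" F F'] X Y True \<open>F \<noteq> F'\<close> by blast
    next
      case False
      then have "(\<forall>x\<in>X. \<forall>y\<in>Y. x < y) \<or> (\<forall>x\<in>Y. \<forall>y\<in>X. x < y)" using sep_lt[OF GG(1) X(1) Y(1)] by blast
      moreover have "F \<subseteq> X" "F' \<subseteq> Y" using sub[OF X] sub[OF Y] by auto
      ultimately show ?thesis by blast
    qed
  qed
  moreover have "FFa \<subseteq> N"
  proof
    fix F assume "F \<in> FFa"
    then obtain X where "X \<in> GG" "F \<in> f X" unfolding FFa_def by blast
    then show "F \<in> N" using f[of X] by blast
  qed
  moreover have "\<Union>FFa = G"
  proof -
    have "\<Union>FFa = (\<Union>X\<in>GG. \<Union>(f X))" unfolding FFa_def by blast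
    also have "\<dots> = (\<Union>X\<in>GG. X)" using f by (intro SUP_cong) auto
    finally show ?thesis using G by simp
  qed
  moreover have "Min ` FFa \<in> fc L M"
  proof -
    have minsub: "Min ` f Z \<subseteq> Z" if "Z \<in> GG" for Z
    proof
      fix z assume "z \<in> Min ` f Z"
      then obtain F where F: "F \<in> f Z" "z = Min F" by blast
      have "sep (f Z)" using f[OF that] by blast
      then have "F \<noteq> {} \<and> finite F" using sep_elem F(1) by blast
      then have "z \<in> F" using F(2) Min_in by blast
      then show "z \<in> Z" using sub[OF that F(1)] by blast
    qed
    have "sep EE"
    proof (rule sep_intro)
      show "finite EE" unfolding EE_def using GGfin by simp
      fix E assume "E \<in> EE"
      then obtain X where X: "X \<in> GG" "E = Min ` f X" unfolding EE_def by blast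
      have "finite (f X)" using f[OF X(1)] by (simp add: sep_def)
      then show "E \<noteq> {} \<and> finite E" using fne[OF X(1)] X(2) by simp
    next
      fix E E' assume "E \<in> EE" "E' \<in> EE" "E \<noteq> E'"
      then obtain X Y where X: "X \<in> GG" "E = Min ` f X" and Y: "Y \<in> GG" "E' = Min ` f Y" unfolding EE_def by blast
      then have "X \<noteq> Y" using \<open>E \<noteq> E'\<close> by blast
      then have "(\<forall>x\<in>X. \<forall>y\<in>Y. x < y) \<or> (\<forall>x\<in>Y. \<forall>y\<in>X. x < y)" using sep_lt[OF GG(1) X(1) Y(1)] by blast
      moreover have "E \<subseteq> X" "E' \<subseteq> Y" using minsub[OF X(1)] minsub[OF Y(1)] X(2) Y(2) by auto
      ultimately show "(\<forall>x\<in>E. \<forall>y\<in>E'. x < y) \<or> (\<forall>x\<in>E'. \<forall>y\<in>E. x < y)" by blast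
    qed
    moreover have "EE \<subseteq> M" unfolding EE_def using f by blast
    moreover have "Min ` FFa = \<Union>EE" unfolding FFa_def EE_def by blast
    moreover have "Min ` EE = Min ` GG"
    proof -
      have "Min (Min ` f X) = Min X" if "X \<in> GG" for X
      proof -
        have "sep (f X)" "\<Union>(f X) = X" using f[OF that] by auto
        then show ?thesis using sep_Min_Union[of "f X"] fne[OF that] by simp
      qed
      then show ?thesis unfolding EE_def image_image by (auto simp: image_def)
    qed
    ultimately show ?thesis unfolding fc_def using GG(3) by (metis (mono_tags, lifting) mem_Collect_eq)
  qed
  ultimately show "G \<in> fc (fc L M) N" unfolding fc_def by blast
qed

lemma fc_assoc: "fc (fc L M) N = fc L (fc M N)"
  using fc_assoc1 fc_assoc2 by blast


lemma fc_empty: "{} \<in> M \<Longrightarrow> {} \<in> fc M N"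
  unfolding fc_def by (rule CollectI, rule exI[of _ "{}"]) simp

lemma fc_good: "(\<forall>F\<in>N. finite F \<and> 0 \<notin> F) \<Longrightarrow> G \<in> fc M N \<Longrightarrow> finite G \<and> 0 \<notin> G"
  unfolding fc_def using sep_Union_finite by blast

lemma fc_zero:
  assumes N: "\<forall>F\<in>N. finite F \<and> 0 \<notin> F" "{} \<in> N"
  shows "fc schreier0 N = N"
proof (intro set_eqI iffI)
  fix G assume "G \<in> fc schreier0 N"
  then obtain FF where G: "G = \<Union>FF" and FF: "sep FF" "FF \<subseteq> N" "Min ` FF \<in> schreier0"
    unfolding fc_def by blast
  show "G \<in> N"
  proof (cases "FF = {}")
    case True then show ?thesis using G N by simp
  next
    case False
    then obtain n where n: "Min ` FF = {n}" using FF(3) unfolding schreier0_def by blast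
    obtain F0 where F0: "F0 \<in> FF" using False by blast
    have "FF = {F0}"
    proof (intro set_eqI iffI)
      fix F assume "F \<in> FF"
      then have "Min F \<in> Min ` FF" "Min F0 \<in> Min ` FF" using F0 by auto
      then have "Min F = Min F0" using n by simp
      then show "F \<in> {F0}" using sep_Min_inj[OF FF(1) \<open>F \<in> FF\<close> F0] by simp
    qed (use F0 in simp)
    then show ?thesis using G FF(2) by simp
  qed
next
  fix G assume G: "G \<in> N"
  show "G \<in> fc schreier0 N"
  proof (cases "G = {}")
    case True then show ?thesis using fc_empty[of schreier0] by (simp add: schreier0_def)
  next
    case False
    have fin: "finite G" "0 \<notin> G" using G N by auto
    have "Min G \<in> G" using Min_in fin False by blast
    then have "1 \<le> Min G" using fin by (cases "Min G") auto
    then have "Min ` {G} \<in> schreier0" unfolding schreier0_def by blast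
    moreover have "sep {G}" using sep_singleton False fin by blast
    ultimately show ?thesis unfolding fc_def using G by blast
  qed
qed

lemma fc_lim:
  "fc ({{}} \<union> {F. F \<noteq> {} \<and> (\<exists>n. 1 \<le> n \<and> n \<le> Min F \<and> F \<in> T n)}) N
   = {{}} \<union> {G. G \<noteq> {} \<and> (\<exists>n. 1 \<le> n \<and> n \<le> Min G \<and> G \<in> fc (T n) N)}"
  (is "fc ?S N = ?R")
proof (intro set_eqI iffI)
  fix G assume "G \<in> fc ?S N"
  then obtain FF where G: "G = \<Union>FF" and FF: "sep FF" "FF \<subseteq> N" "Min ` FF \<in> ?S"
    unfolding fc_def by blast
  show "G \<in> ?R"
  proof (cases "FF = {}")
    case True then show ?thesis using G by simp
  next
    case False
    then have ne: "Min ` FF \<noteq> {}" by simp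
    then obtain n where n: "1 \<le> n" "n \<le> Min (Min ` FF)" "Min ` FF \<in> T n" using FF(3) by blast
    have "Min G = Min (Min ` FF)" using G sep_Min_Union[OF FF(1) False] by simp
    moreover have "G \<in> fc (T n) N" unfolding fc_def using G FF n by blast
    moreover have "G \<noteq> {}" using G sep_Union_empty[OF FF(1)] False by simp
    ultimately show ?thesis using n by auto
  qed
next
  fix G assume "G \<in> ?R"
  then consider "G = {}" | n where "G \<noteq> {}" "1 \<le> n" "n \<le> Min G" "G \<in> fc (T n) N" by blast
  then show "G \<in> fc ?S N"
  proof cases
    case 1 then show ?thesis using fc_empty[of ?S N] by simp
  next
    case 2
    then obtain FF where G: "G = \<Union>FF" and FF: "sep FF" "FF \<subseteq> N" "Min ` FF \<in> T n"
      unfolding fc_def by blast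
    have "FF \<noteq> {}" using G 2 by auto
    then have "Min G = Min (Min ` FF)" "Min ` FF \<noteq> {}" using G sep_Min_Union[OF FF(1)] by auto
    then have "Min ` FF \<in> ?S" using 2 FF by auto
    then show ?thesis unfolding fc_def using G FF by blast
  qed
qed

context om1
begin

lemma sch_good: "(\<forall>F\<in>schreier zeta x. finite F \<and> 0 \<notin> F) \<and> {} \<in> schreier zeta x"
proof (induction x rule: ord_induct)
  case zero then show ?case by (auto simp: sch_0 schreier0_def)
next
  case (succ y)
  have "{} \<in> schreier1" by (simp add: schreier1_def)
  then show ?case using succ fc_good fc_empty by (simp add: sch_succ fam_comp_fc) blast
next
  case (limit x)
  have "\<And>n. (\<forall>F\<in>schreier zeta (hat zeta x n). finite F \<and> 0 \<notin> F)" using limit hat_less by blast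
  then show ?case by (simp add: sch_lim[OF limit(1)]) blast
qed

lemma main:
  assumes m: "1 \<le> m"
  shows "ell a \<le> \<eta> \<Longrightarrow> fc (schreier zeta a) (schreier zeta (oterm \<eta> m)) = schreier zeta (oadd (oterm \<eta> m) a)"
proof (induction a rule: less_induct)
  case (less a)
  let ?N = "schreier zeta (oterm \<eta> m)"
  let ?b = "oterm \<eta> m"
  show ?case
  proof (cases a rule: ord_cases)
    case 1
    then show ?thesis using sch_good[of ?b] by (simp add: sch_0 fc_zero)
  next
    case (2 y)
    have "ell y \<le> ell a" using 2 less_osucc by (intro ell_mono) (simp add: less_imp_le)
    then have IH: "fc (schreier zeta y) ?N = schreier zeta (oadd ?b y)"
      using less 2 less_osucc by auto
    have "fc (schreier zeta a) ?N = fc (fc schreier1 (schreier zeta y)) ?N"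
      using 2 by (simp add: sch_succ fam_comp_fc)
    also have "\<dots> = fc schreier1 (schreier zeta (oadd ?b y))" by (simp add: fc_assoc IH)
    also have "\<dots> = schreier zeta (oadd ?b a)" using 2 by (simp add: sch_succ fam_comp_fc)
    finally show ?thesis .
  next
    case 3
    have IH: "fc (schreier zeta (hat zeta a n)) ?N = schreier zeta (hat zeta (oadd ?b a) n)" for n
    proof -
      have lt: "hat zeta a n < a" using hat_less[OF 3] .
      then have "ell (hat zeta a n) \<le> ell a" using ell_mono[of "hat zeta a n" a] by simp
      then have "ell (hat zeta a n) \<le> \<eta>" using less.prems by (rule order.trans)
      then have "fc (schreier zeta (hat zeta a n)) ?N = schreier zeta (oadd ?b (hat zeta a n))"
        using less.IH lt by blast
      also have "oadd ?b (hat zeta a n) = hat zeta (oadd ?b a) n"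
        using hat_shift[OF 3 less.prems m] by simp
      finally show ?thesis .
    qed
    have "fc (schreier zeta a) ?N = {{}} \<union> {G. G \<noteq> {} \<and> (\<exists>n. 1 \<le> n \<and> n \<le> Min G \<and> G \<in> fc (schreier zeta (hat zeta a n)) ?N)}"
      unfolding sch_lim[OF 3] by (rule fc_lim)
    also have "\<dots> = schreier zeta (oadd ?b a)"
      unfolding sch_lim[OF oadd_limit[OF 3]] IH ..
    finally show ?thesis .
  qed
qed

end

theorem lemma25:
  fixes zeta :: "'o::wellorder \<Rightarrow> nat \<Rightarrow> 'o" and \<alpha> \<eta> :: 'o and m :: nat
  assumes "\<forall>x::'o. countable {y. y < x}"
    and "\<not> countable (UNIV :: 'o set)"
    and "\<forall>l. is_limit l \<longrightarrow> strict_mono (zeta l) \<and> osup (range (zeta l)) = l"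
    and "ell \<alpha> \<le> \<eta>"
    and "1 \<le> m"
  shows "fam_comp (schreier zeta \<alpha>) (schreier zeta (omul (oexp_omega \<eta>) (onat m)))
       = schreier zeta (oadd (omul (oexp_omega \<eta>) (onat m)) \<alpha>)"
proof -
  interpret om1 zeta using assms(1-3) by unfold_locales
  show ?thesis unfolding fam_comp_fc using main[OF assms(5) assms(4)] .
qed


end
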